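(* For every integer $n\geq 38$ there exists a neutral graph on $n$ vertices that is not a tree.
   Context: All graphs are finite, simple and connected. For a graph $G=(V,E)$ with $m=|E|\geq 1$ edges, let $d_u$ denote the degree of vertex $u$ and write sums over edges $e_{uv}\in E$ (each edge counted once). The assortativity coefficient of $G$ is $$r(G)=\frac{m^{-1}\sum_{e_{uv}\in E} d_{u}d_{v}-\Big[m^{-1}\sum_{e_{uv}\in E} \tfrac{1}{2}(d_{u}+d_{v})\Big]^{2}}{m^{-1}\sum_{e_{uv}\in E} \tfrac{1}{2}(d^{2}_{u}+d^{2}_{v})-\Big[m^{-1}\sum_{e_{uv}\in E} \tfrac{1}{2}(d_{u}+d_{v})\Big]^{2}},$$ defined whenever the denominator is nonzero. $G$ is called neutral if $r(G)$ is defined and $r(G)=0$. *)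

theory Defs
  imports Complex_Main
begin

definition simple_graph :: "'a set \<Rightarrow> 'a set set \<Rightarrow> bool" where
  "simple_graph V E \<longleftrightarrow> finite V \<and>
     (\<forall>e\<in>E. \<exists>u v. e = {u, v} \<and> u \<noteq> v \<and> u \<in> V \<and> v \<in> V)"

definition adj :: "'a set set \<Rightarrow> 'a \<Rightarrow> 'a \<Rightarrow> bool" where
  "adj E u v \<longleftrightarrow> {u, v} \<in> E \<and> u \<noteq> v"

definition connected_graph :: "'a set \<Rightarrow> 'a set set \<Rightarrow> bool" where
  "connected_graph V E \<longleftrightarrow> V \<noteq> {} \<and> (\<forall>u\<in>V. \<forall>v\<in>V. (adj E)\<^sup>*\<^sup>* u v)"

definition is_cycle :: "'a set set \<Rightarrow> 'a list \<Rightarrow> bool" where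
  "is_cycle E vs \<longleftrightarrow> length vs \<ge> 3 \<and> distinct vs \<and>
     (\<forall>i. Suc i < length vs \<longrightarrow> adj E (vs ! i) (vs ! Suc i)) \<and>
     adj E (last vs) (hd vs)"

definition acyclic_graph :: "'a set set \<Rightarrow> bool" where
  "acyclic_graph E \<longleftrightarrow> \<not> (\<exists>vs. is_cycle E vs)"

definition is_tree :: "'a set \<Rightarrow> 'a set set \<Rightarrow> bool" where
  "is_tree V E \<longleftrightarrow> connected_graph V E \<and> acyclic_graph E"

definition deg :: "'a set set \<Rightarrow> 'a \<Rightarrow> nat" where
  "deg E u = card {e\<in>E. u \<in> e}"

definition assort_mean :: "'a set set \<Rightarrow> real" where
  "assort_mean E = (\<Sum>e\<in>E. (1/2) * (\<Sum>x\<in>e. real (deg E x))) / real (card E)"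

definition assort_num :: "'a set set \<Rightarrow> real" where
  "assort_num E = (\<Sum>e\<in>E. (\<Prod>x\<in>e. real (deg E x))) / real (card E) - (assort_mean E)\<^sup>2"

definition assort_den :: "'a set set \<Rightarrow> real" where
  "assort_den E = (\<Sum>e\<in>E. (1/2) * (\<Sum>x\<in>e. (real (deg E x))\<^sup>2)) / real (card E) - (assort_mean E)\<^sup>2"

definition assortativity :: "'a set set \<Rightarrow> real" where
  "assortativity E = assort_num E / assort_den E"

definition neutral :: "'a set set \<Rightarrow> bool" where
  "neutral E \<longleftrightarrow> card E \<ge> 1 \<and> assort_den E \<noteq> 0 \<and> assortativity E = 0"

end

theory Submission
  imports Defs
begin


definition dl :: "(nat \<times> nat) list \<Rightarrow> nat \<Rightarrow> nat" where
  "dl L j = length (filter (\<lambda>(a,b). a = j \<or> b = j) L)"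

definition dloc :: "(nat \<times> nat) list \<Rightarrow> nat \<Rightarrow> nat \<Rightarrow> real" where
  "dloc L s j = real (dl L j) + (if j = 0 then 1 else 0) + (if j = s - 1 then 1 else 0)"

definition good_unit :: "(nat \<times> nat) list \<Rightarrow> nat \<Rightarrow> bool" where
  "good_unit L s \<longleftrightarrow> s \<ge> 2 \<and> distinct L \<and> list_all (\<lambda>(a,b). a < b \<and> b < s) L \<and> (0, s-1) \<in> set L
    \<and> list_all (\<lambda>j. list_ex (\<lambda>(a,b). b = j \<and> a < j) L) [1..<s]
    \<and> dl L 0 = 2 \<and> dl L (s-1) = 1
    \<and> sum_list (map (\<lambda>(a,b). dloc L s a + dloc L s b) L) + 5 = 6 * (real (length L) + 1)
    \<and> sum_list (map (\<lambda>(a,b). dloc L s a * dloc L s b) L) + 6 = 9 * (real (length L) + 1)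
    \<and> sum_list (map (\<lambda>(a,b). (dloc L s a)\<^sup>2 + (dloc L s b)\<^sup>2) L) + 13 > 18 * (real (length L) + 1)"

definition U7 :: "(nat \<times> nat) list" where
  "U7 = [(0,1), (0,6), (1,2), (1,3), (1,4), (2,4), (2,5), (3,4), (3,5)]"
definition U8 :: "(nat \<times> nat) list" where
  "U8 = [(0,1), (0,7), (1,2), (1,3), (1,4), (2,3), (2,4), (3,5), (4,5), (5,6)]"
definition U9 :: "(nat \<times> nat) list" where
  "U9 = [(0,1), (0,8), (1,2), (1,3), (1,4), (2,4), (2,5), (2,6), (3,4), (3,7), (5,6)]"

lemma good7: "good_unit U7 7"
  by (simp add: good_unit_def U7_def dloc_def dl_def upt_rec power2_eq_square)
lemma good8: "good_unit U8 8"
  by (simp add: good_unit_def U8_def dloc_def dl_def upt_rec power2_eq_square)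
lemma good9: "good_unit U9 9"
  by (simp add: good_unit_def U9_def dloc_def dl_def upt_rec power2_eq_square)


definition sh :: "nat \<Rightarrow> (nat \<times> nat) list \<Rightarrow> nat set set" where
  "sh k L = (\<lambda>(a,b). {k+a, k+b}) ` set L"

lemma sh_inj:
  assumes "list_all (\<lambda>(a,b). a < b) L"
  shows "inj_on (\<lambda>(a,b). {k+a, k+b::nat}) (set L)"
proof (rule inj_onI)
  fix p q assume p: "p \<in> set L" and q: "q \<in> set L" and eq: "(\<lambda>(a,b). {k+a, k+b::nat}) p = (\<lambda>(a,b). {k+a, k+b}) q"
  obtain a b where ab: "p = (a,b)" by (cases p)
  obtain c d where cd: "q = (c,d)" by (cases q)
  have "a < b" "c < d" using assms p q ab cd by (auto simp: list_all_iff)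
  moreover have "{k+a,k+b} = {k+c,k+d}" using eq ab cd by simp
  ultimately show "p = q" using ab cd by (auto simp: doubleton_eq_iff)
qed

lemma card_sh_mem:
  assumes "list_all (\<lambda>(a,b). a < b) L" "distinct L"
  shows "card {e \<in> sh k L. k + j \<in> e} = dl L j"
proof -
  let ?f = "\<lambda>(a,b). {k+a, k+b::nat}"
  have "{e \<in> sh k L. k + j \<in> e} = ?f ` {p \<in> set L. fst p = j \<or> snd p = j}"
    unfolding sh_def by auto
  moreover have "inj_on ?f {p \<in> set L. fst p = j \<or> snd p = j}"
    using sh_inj[OF assms(1)] by (rule inj_on_subset) auto
  ultimately have "card {e \<in> sh k L. k + j \<in> e} = card {p \<in> set L. fst p = j \<or> snd p = j}"
    by (simp add: card_image)
  also have "\<dots> = length (filter (\<lambda>p. fst p = j \<or> snd p = j) L)"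
    using distinct_length_filter[OF assms(2)] by (simp add: Int_def conj_commute)
  also have "\<dots> = length (filter (\<lambda>(a,b). a = j \<or> b = j) L)"
    by (rule arg_cong[where f=length], rule filter_cong) auto
  finally show ?thesis unfolding dl_def .
qed

lemma sum_sh:
  assumes "list_all (\<lambda>(a,b). a < b) L" "distinct L"
  shows "(\<Sum>e\<in>sh k L. g e) = sum_list (map (\<lambda>(a,b). g {k+a, k+b}) L)"
proof -
  have "(\<Sum>e\<in>sh k L. g e) = (\<Sum>p\<in>set L. g ((\<lambda>(a,b). {k+a, k+b}) p))"
    unfolding sh_def using sum.reindex[OF sh_inj[OF assms(1)]] by (simp add: comp_def)
  also have "\<dots> = sum_list (map (\<lambda>p. g ((\<lambda>(a,b). {k+a, k+b}) p)) L)"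
    using sum_list_distinct_conv_sum_set[OF assms(2)] by metis
  finally show ?thesis by (simp only: prod.case_distrib)
qed

lemma card_sh:
  assumes "list_all (\<lambda>(a,b). a < b) L" "distinct L"
  shows "card (sh k L) = length L"
  unfolding sh_def using card_image[OF sh_inj[OF assms(1)]] distinct_card[OF assms(2)] by simp



definition dlt :: "nat set set \<Rightarrow> nat \<Rightarrow> nat \<Rightarrow> real" where
  "dlt E n v = real (deg E v) + (if v = n - 1 then 1 else 0) + (if v = 0 then 1 else 0)"

definition S1 :: "nat set set \<Rightarrow> nat \<Rightarrow> real" where
  "S1 E n = (\<Sum>e\<in>E. \<Sum>x\<in>e. dlt E n x)"
definition S2 :: "nat set set \<Rightarrow> nat \<Rightarrow> real" where
  "S2 E n = (\<Sum>e\<in>E. \<Prod>x\<in>e. dlt E n x)"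
definition S3 :: "nat set set \<Rightarrow> nat \<Rightarrow> real" where
  "S3 E n = (\<Sum>e\<in>E. \<Sum>x\<in>e. (dlt E n x)\<^sup>2)"

definition Inv :: "nat set set \<Rightarrow> nat \<Rightarrow> bool" where
  "Inv E n \<longleftrightarrow> n \<ge> 7 \<and> finite E \<and> (\<forall>e\<in>E. \<exists>u v. e = {u,v} \<and> u < v \<and> v < n)
     \<and> (\<forall>v<n. (adj E)\<^sup>*\<^sup>* v 0) \<and> deg E (n - 1) = 1 \<and> deg E 0 = 2
     \<and> S1 E n + 5 = 6 * (real (card E) + 1)
     \<and> S2 E n + 6 = 9 * (real (card E) + 1)
     \<and> S3 E n + 13 > 18 * (real (card E) + 1)"

lemma good_unitD:
  assumes "good_unit L s"
  shows "s \<ge> 2" "distinct L" "list_all (\<lambda>(a,b). a < b) L" "\<And>a b. (a,b) \<in> set L \<Longrightarrow> a < b \<and> b < s"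
    "(0, s-1) \<in> set L"
    "\<And>j. 1 \<le> j \<Longrightarrow> j < s \<Longrightarrow> \<exists>a. (a,j) \<in> set L \<and> a < j"
    "dl L 0 = 2" "dl L (s-1) = 1"
    "sum_list (map (\<lambda>(a,b). dloc L s a + dloc L s b) L) + 5 = 6 * (real (length L) + 1)"
    "sum_list (map (\<lambda>(a,b). dloc L s a * dloc L s b) L) + 6 = 9 * (real (length L) + 1)"
    "sum_list (map (\<lambda>(a,b). (dloc L s a)\<^sup>2 + (dloc L s b)\<^sup>2) L) + 13 > 18 * (real (length L) + 1)"
  using assms unfolding good_unit_def list_all_iff list_ex_iff
  by (auto simp: list_all_iff)

lemma deg_union:
  assumes "finite A" "finite B" "A \<inter> B = {}"
  shows "deg (A \<union> B) v = deg A v + card {e\<in>B. v \<in> e}"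
proof -
  have "{e \<in> A \<union> B. v \<in> e} = {e\<in>A. v\<in>e} \<union> {e\<in>B. v\<in>e}" by auto
  moreover have "card ({e\<in>A. v\<in>e} \<union> {e\<in>B. v\<in>e}) = card {e\<in>A. v\<in>e} + card {e\<in>B. v\<in>e}"
    by (rule card_Un_disjoint) (use assms in auto)
  ultimately show ?thesis unfolding deg_def by simp
qed

lemma adj_mono: "E \<subseteq> E' \<Longrightarrow> (adj E)\<^sup>*\<^sup>* u v \<Longrightarrow> (adj E')\<^sup>*\<^sup>* u v"
  by (erule rtranclp_mono[THEN predicate2D, rotated]) (auto simp: adj_def)

lemma adj_sym: "(adj E)\<^sup>*\<^sup>* u v \<Longrightarrow> (adj E)\<^sup>*\<^sup>* v u"
proof (induction rule: rtranclp_induct)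
  case base then show ?case by simp
next
  case (step y z)
  have "adj E z y" using step(2) by (auto simp: adj_def insert_commute)
  then show ?case using step(3) by (meson converse_rtranclp_into_rtranclp)
qed



lemma step_facts:
  assumes I: "Inv E n" and G: "good_unit L s"
  defines "E' \<equiv> E \<union> sh n L \<union> {{n - 1, n}}"
  shows "\<And>v. v < n \<Longrightarrow> dlt E' (n+s) v = dlt E n v"
    and "\<And>j. j < s \<Longrightarrow> dlt E' (n+s) (n+j) = dloc L s j"
    and "\<And>Gf :: (nat \<Rightarrow> real) \<Rightarrow> nat set \<Rightarrow> real. (\<And>f f' e. (\<And>x. x \<in> e \<Longrightarrow> f x = f' x) \<Longrightarrow> Gf f e = Gf f' e) \<Longrightarrow>
          (\<Sum>e\<in>E'. Gf (dlt E' (n+s)) e) = (\<Sum>e\<in>E. Gf (dlt E n) e)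
             + sum_list (map (\<lambda>(a,b). Gf (dlt E' (n+s)) {n+a, n+b}) L) + Gf (dlt E' (n+s)) {n - 1, n}"
    and "card E' = card E + length L + 1"
    and "finite E'"
    and "\<forall>e\<in>E'. \<exists>u v. e = {u,v} \<and> u < v \<and> v < n + s"
    and "deg E' 0 = deg E 0"
    and "deg E' (n + s - 1) = 1"
proof -
  have n7: "n \<ge> 7" and finE: "finite E" and edE: "\<forall>e\<in>E. \<exists>u v. e = {u,v} \<and> u < v \<and> v < n"
    and d1: "deg E (n - 1) = 1"
    using I unfolding Inv_def by auto
  note g = good_unitD[OF G]
  have finS: "finite (sh n L)" unfolding sh_def by simp
  have shE: "\<And>e. e \<in> sh n L \<Longrightarrow> \<exists>a b. e = {n+a, n+b} \<and> a < b \<and> b < s"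
    unfolding sh_def using g(4) by fastforce
  have disj1: "E \<inter> sh n L = {}"
  proof -
    { fix e assume "e \<in> E" "e \<in> sh n L"
      then obtain a b where "e = {n+a,n+b}" using shE by blast
      moreover obtain u v where "e = {u,v}" "u < v" "v < n" using edE \<open>e\<in>E\<close> by blast
      ultimately have False by (auto simp: doubleton_eq_iff) }
    then show ?thesis by blast
  qed
  have disj2: "(E \<union> sh n L) \<inter> {{n - 1, n}} = {}"
  proof -
    have "{n - 1, n} \<notin> E" using edE by (fastforce simp: doubleton_eq_iff)
    moreover have "{n - 1, n} \<notin> sh n L"
    proof
      assume "{n - 1, n} \<in> sh n L"
      then obtain a b where "{n - 1, n} = {n+a,n+b}" using shE by blast
      then show False using n7 by (auto simp: doubleton_eq_iff)
    qed
    ultimately show ?thesis by blast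
  qed
  have degE': "deg E' v = deg E v + card {e\<in>sh n L. v \<in> e} + (if v = n - 1 \<or> v = n then 1 else 0)" for v
  proof -
    have "deg E' v = deg (E \<union> sh n L) v + card {e\<in>{{n - 1, n}}. v \<in> e}"
      unfolding E'_def by (rule deg_union) (use finE finS disj2 in auto)
    also have "deg (E \<union> sh n L) v = deg E v + card {e\<in>sh n L. v \<in> e}"
      by (rule deg_union) (use finE finS disj1 in auto)
    also have "{e\<in>{{n - 1, n}}. v \<in> e} = (if v = n - 1 \<or> v = n then {{n - 1, n}} else {})"
      by auto
    then have "card {e\<in>{{n - 1, n}}. v \<in> e} = (if v = n - 1 \<or> v = n then 1 else 0)"
      by simp
    finally show ?thesis .
  qed
  have degold: "deg E' v = deg E v + (if v = n - 1 then 1 else 0)" if "v < n" for v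
  proof -
    have "{e\<in>sh n L. v \<in> e} = {}" using shE that by fastforce
    then show ?thesis using degE'[of v] that by (simp only:) simp
  qed
  have deg0: "deg E v = 0" if "v \<ge> n" for v
  proof -
    have "{e\<in>E. v \<in> e} = {}" using edE that by fastforce
    then show ?thesis unfolding deg_def by (metis card.empty)
  qed
  have degnew: "deg E' (n+j) = dl L j + (if j = 0 then 1 else 0)" for j
    using degE'[of "n+j"] deg0[of "n+j"] card_sh_mem[OF g(3) g(2), of n j] n7 by auto
  show dold: "dlt E' (n+s) v = dlt E n v" if "v < n" for v
    using degold[OF that] that g(1) unfolding dlt_def by auto
  show dnew: "dlt E' (n+s) (n+j) = dloc L s j" if "j < s" for j
    using degnew[of j] that g(1) n7 unfolding dlt_def dloc_def by auto
  show "deg E' 0 = deg E 0" using degold[of 0] n7 by simp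
  show "deg E' (n + s - 1) = 1"
  proof -
    have "n + s - 1 = n + (s - 1)" using g(1) by simp
    then show ?thesis using degnew[of "s - 1"] g(1) g(8) by simp
  qed
  show finE': "finite E'" unfolding E'_def using finE finS by simp
  show "card E' = card E + length L + 1"
    unfolding E'_def using card_Un_disjoint[OF _ _ disj2] card_Un_disjoint[OF finE finS disj1]
      card_sh[OF g(3) g(2)] finE finS by simp
  show "\<forall>e\<in>E'. \<exists>u v. e = {u,v} \<and> u < v \<and> v < n + s"
  proof
    fix e assume "e \<in> E'"
    then consider "e \<in> E" | "e \<in> sh n L" | "e = {n - 1, n}" unfolding E'_def by blast
    then show "\<exists>u v. e = {u,v} \<and> u < v \<and> v < n + s"
    proof cases
      case 1 then show ?thesis using edE by fastforce
    next
      case 2 then obtain a b where "e = {n+a,n+b}" "a < b" "b < s" using shE by blast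
      then show ?thesis by (intro exI[of _ "n+a"] exI[of _ "n+b"]) auto
    next
      case 3 then show ?thesis using n7 g(1) by (intro exI[of _ "n - 1"] exI[of _ n]) auto
    qed
  qed
  fix Gf :: "(nat \<Rightarrow> real) \<Rightarrow> nat set \<Rightarrow> real"
  assume loc: "\<And>f f' e. (\<And>x. x \<in> e \<Longrightarrow> f x = f' x) \<Longrightarrow> Gf f e = Gf f' e"
  have A: "(\<Sum>e\<in>E'. Gf (dlt E' (n+s)) e) = (\<Sum>e\<in>E \<union> sh n L. Gf (dlt E' (n+s)) e) + Gf (dlt E' (n+s)) {n - 1, n}"
    unfolding E'_def using sum.union_disjoint[OF _ _ disj2] finE finS by simp
  have B: "(\<Sum>e\<in>E \<union> sh n L. Gf (dlt E' (n+s)) e) = (\<Sum>e\<in>E. Gf (dlt E' (n+s)) e) + (\<Sum>e\<in>sh n L. Gf (dlt E' (n+s)) e)"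
    using sum.union_disjoint[OF finE finS disj1] by simp
  have C: "(\<Sum>e\<in>E. Gf (dlt E' (n+s)) e) = (\<Sum>e\<in>E. Gf (dlt E n) e)"
  proof (rule sum.cong[OF refl], rule loc)
    fix e x assume "e \<in> E" "x \<in> e"
    then have "x < n" using edE by fastforce
    then show "dlt E' (n+s) x = dlt E n x" by (rule dold)
  qed
  have D: "(\<Sum>e\<in>sh n L. Gf (dlt E' (n+s)) e) = sum_list (map (\<lambda>(a,b). Gf (dlt E' (n+s)) {n+a, n+b}) L)"
    by (rule sum_sh[OF g(3) g(2)])
  show "(\<Sum>e\<in>E'. Gf (dlt E' (n+s)) e) = (\<Sum>e\<in>E. Gf (dlt E n) e)
             + sum_list (map (\<lambda>(a,b). Gf (dlt E' (n+s)) {n+a, n+b}) L) + Gf (dlt E' (n+s)) {n - 1, n}"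
    unfolding A B C D ..
qed



lemma sum_list_cong_set: "(\<And>x. x \<in> set L \<Longrightarrow> f x = g x) \<Longrightarrow> sum_list (map f L) = sum_list (map g L)"
  by (metis map_eq_conv)

lemma step:
  assumes I: "Inv E n" and G: "good_unit L s"
  shows "Inv (E \<union> sh n L \<union> {{n - 1, n}}) (n+s) \<and> {n + s - 1, 0} \<notin> E \<union> sh n L \<union> {{n - 1, n}}"
proof -
  define E' where "E' = E \<union> sh n L \<union> {{n - 1, n}}"
  note F = step_facts[OF I G, folded E'_def]
  note g = good_unitD[OF G]
  have n7: "n \<ge> 7" and finE: "finite E" and edE: "\<forall>e\<in>E. \<exists>u v. e = {u,v} \<and> u < v \<and> v < n"
    and d1: "deg E (n - 1) = 1" and d0: "deg E 0 = 2" and conn: "\<forall>v<n. (adj E)\<^sup>*\<^sup>* v 0"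
    and s1: "S1 E n + 5 = 6 * (real (card E) + 1)"
    and s2: "S2 E n + 6 = 9 * (real (card E) + 1)"
    and s3: "S3 E n + 13 > 18 * (real (card E) + 1)"
    using I unfolding Inv_def by auto
  have sub: "E \<subseteq> E'" "sh n L \<subseteq> E'" "{n - 1, n} \<in> E'" unfolding E'_def by auto
  have conn_new: "(adj E')\<^sup>*\<^sup>* (n+j) n" if "j < s" for j
    using that
  proof (induction j rule: less_induct)
    case (less j)
    show ?case
    proof (cases "j = 0")
      case True then show ?thesis by simp
    next
      case False
      then obtain a where a: "(a,j) \<in> set L" "a < j" using g(6)[of j] less.prems by auto
      have "{n+a, n+j} \<in> E'" using sub(2) a(1) unfolding sh_def by force
      then have "adj E' (n+j) (n+a)" using a(2) by (auto simp: adj_def insert_commute)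
      moreover have "(adj E')\<^sup>*\<^sup>* (n+a) n" using less.IH[of a] a(2) less.prems by simp
      ultimately show ?thesis by (meson converse_rtranclp_into_rtranclp)
    qed
  qed
  have "adj E' n (n - 1)" using sub(3) n7 by (auto simp: adj_def insert_commute)
  moreover have "(adj E')\<^sup>*\<^sup>* (n - 1) 0" using conn n7 adj_mono[OF sub(1)] by simp
  ultimately have n0: "(adj E')\<^sup>*\<^sup>* n 0" by (meson converse_rtranclp_into_rtranclp)
  have connE': "\<forall>v<n+s. (adj E')\<^sup>*\<^sup>* v 0"
  proof (intro allI impI)
    fix v assume "v < n + s"
    show "(adj E')\<^sup>*\<^sup>* v 0"
    proof (cases "v < n")
      case True then show ?thesis using conn adj_mono[OF sub(1)] by blast
    next
      case False
      then have "v = n + (v - n)" "v - n < s" using \<open>v < n + s\<close> by auto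
      then show ?thesis using conn_new[of "v - n"] n0 by (metis rtranclp_trans)
    qed
  qed
  have notin: "{n + s - 1, 0} \<notin> E'"
  proof
    assume "{n + s - 1, 0} \<in> E'"
    then consider "{n + s - 1, 0} \<in> E" | "{n + s - 1, 0} \<in> sh n L" | "{n + s - 1, 0} = {n - 1, n}"
      unfolding E'_def by (metis Un_iff singletonD)
    then show False
    proof cases
      case 1 then obtain u v where "{n + s - 1, 0} = {u,v}" "u < v" "v < n" using edE by blast
      then show False using g(1) by (auto simp: doubleton_eq_iff)
    next
      case 2 then obtain a b where "{n + s - 1, 0} = {n+a,n+b}" unfolding sh_def by auto
      then show False using n7 by (auto simp: doubleton_eq_iff)
    next
      case 3 then show False using n7 by (auto simp: doubleton_eq_iff)
    qed
  qed
  have dn1: "dlt E' (n+s) (n - 1) = 2" using F(1)[of "n - 1"] n7 d1 unfolding dlt_def by simp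
  have dn: "dlt E' (n+s) n = 3" using F(2)[of 0] g(1) g(7) unfolding dloc_def by simp
  have ne: "n - 1 \<noteq> n" using n7 by simp
  have pairs: "\<And>a b. (a,b) \<in> set L \<Longrightarrow> n + a \<noteq> n + b \<and> dlt E' (n+s) (n+a) = dloc L s a \<and> dlt E' (n+s) (n+b) = dloc L s b"
    using g(4) F(2) by fastforce
  have S1': "S1 E' (n+s) = S1 E n + sum_list (map (\<lambda>(a,b). dloc L s a + dloc L s b) L) + 5"
  proof -
    have "S1 E' (n+s) = S1 E n + sum_list (map (\<lambda>(a,b). (\<Sum>x\<in>{n+a,n+b}. dlt E' (n+s) x)) L) + (\<Sum>x\<in>{n - 1, n}. dlt E' (n+s) x)"
      unfolding S1_def by (rule F(3)[of "\<lambda>f e. \<Sum>x\<in>e. f x"]) (rule sum.cong, auto)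
    also have "sum_list (map (\<lambda>(a,b). (\<Sum>x\<in>{n+a,n+b}. dlt E' (n+s) x)) L) = sum_list (map (\<lambda>(a,b). dloc L s a + dloc L s b) L)"
      by (rule sum_list_cong_set) (use pairs in auto)
    finally show ?thesis using ne dn1 dn by simp
  qed
  have S2': "S2 E' (n+s) = S2 E n + sum_list (map (\<lambda>(a,b). dloc L s a * dloc L s b) L) + 6"
  proof -
    have "S2 E' (n+s) = S2 E n + sum_list (map (\<lambda>(a,b). (\<Prod>x\<in>{n+a,n+b}. dlt E' (n+s) x)) L) + (\<Prod>x\<in>{n - 1, n}. dlt E' (n+s) x)"
      unfolding S2_def by (rule F(3)[of "\<lambda>f e. \<Prod>x\<in>e. f x"]) (rule prod.cong, auto)
    also have "sum_list (map (\<lambda>(a,b). (\<Prod>x\<in>{n+a,n+b}. dlt E' (n+s) x)) L) = sum_list (map (\<lambda>(a,b). dloc L s a * dloc L s b) L)"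
      by (rule sum_list_cong_set) (use pairs in auto)
    finally show ?thesis using ne dn1 dn by simp
  qed
  have S3': "S3 E' (n+s) = S3 E n + sum_list (map (\<lambda>(a,b). (dloc L s a)\<^sup>2 + (dloc L s b)\<^sup>2) L) + 13"
  proof -
    have "S3 E' (n+s) = S3 E n + sum_list (map (\<lambda>(a,b). (\<Sum>x\<in>{n+a,n+b}. (dlt E' (n+s) x)\<^sup>2)) L) + (\<Sum>x\<in>{n - 1, n}. (dlt E' (n+s) x)\<^sup>2)"
      unfolding S3_def by (rule F(3)[of "\<lambda>f e. \<Sum>x\<in>e. (f x)\<^sup>2"]) (rule sum.cong, auto)
    also have "sum_list (map (\<lambda>(a,b). (\<Sum>x\<in>{n+a,n+b}. (dlt E' (n+s) x)\<^sup>2)) L) = sum_list (map (\<lambda>(a,b). (dloc L s a)\<^sup>2 + (dloc L s b)\<^sup>2) L)"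
      by (rule sum_list_cong_set) (use pairs in auto)
    finally show ?thesis using ne dn1 dn by simp
  qed
  have "Inv E' (n+s)"
    unfolding Inv_def
  proof (intro conjI)
    show "7 \<le> n + s" using n7 by simp
    show "finite E'" by (rule F(5))
    show "\<forall>e\<in>E'. \<exists>u v. e = {u, v} \<and> u < v \<and> v < n + s" by (rule F(6))
    show "\<forall>v<n + s. (adj E')\<^sup>*\<^sup>* v 0" by (rule connE')
    show "deg E' (n + s - 1) = 1" by (rule F(8))
    show "deg E' 0 = 2" using F(7) d0 by simp
    show "S1 E' (n + s) + 5 = 6 * (real (card E') + 1)" unfolding S1' F(4) using s1 g(9) by simp
    show "S2 E' (n + s) + 6 = 9 * (real (card E') + 1)" unfolding S2' F(4) using s2 g(10) by simp
    show "S3 E' (n + s) + 13 > 18 * (real (card E') + 1)" unfolding S3' F(4) using s3 g(11) by simp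
  qed
  then show ?thesis using notin unfolding E'_def by simp
qed



lemma base:
  assumes G: "good_unit L s" and s7: "s \<ge> 7"
  shows "Inv (sh 0 L) s"
proof -
  define E where "E = sh 0 L"
  note g = good_unitD[OF G]
  have shE: "\<And>e. e \<in> E \<Longrightarrow> \<exists>a b. e = {a, b} \<and> a < b \<and> b < s"
    unfolding E_def sh_def using g(4) by fastforce
  have degj: "deg E j = dl L j" for j
    using card_sh_mem[OF g(3) g(2), of 0 j] unfolding E_def deg_def by simp
  have dj: "dlt E s j = dloc L s j" for j
    unfolding dlt_def dloc_def degj by simp
  have conn: "(adj E)\<^sup>*\<^sup>* j 0" if "j < s" for j
    using that
  proof (induction j rule: less_induct)
    case (less j)
    show ?case
    proof (cases "j = 0")
      case True then show ?thesis by simp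
    next
      case False
      then obtain a where a: "(a,j) \<in> set L" "a < j" using g(6)[of j] less.prems by auto
      have "{a, j} \<in> E" using a(1) unfolding E_def sh_def by force
      then have "adj E j a" using a(2) by (auto simp: adj_def insert_commute)
      moreover have "(adj E)\<^sup>*\<^sup>* a 0" using less.IH[of a] a(2) less.prems by simp
      ultimately show ?thesis by (meson converse_rtranclp_into_rtranclp)
    qed
  qed
  have pairs: "\<And>a b. (a,b) \<in> set L \<Longrightarrow> a \<noteq> b" using g(4) by fastforce
  have S1': "S1 E s = sum_list (map (\<lambda>(a,b). dloc L s a + dloc L s b) L)"
  proof -
    have "S1 E s = sum_list (map (\<lambda>(a,b). (\<Sum>x\<in>{0+a,0+b}. dlt E s x)) L)"
      unfolding S1_def E_def by (rule sum_sh[OF g(3) g(2)])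
    also have "\<dots> = sum_list (map (\<lambda>(a,b). dloc L s a + dloc L s b) L)"
      by (rule sum_list_cong_set) (use pairs dj in auto)
    finally show ?thesis .
  qed
  have S2': "S2 E s = sum_list (map (\<lambda>(a,b). dloc L s a * dloc L s b) L)"
  proof -
    have "S2 E s = sum_list (map (\<lambda>(a,b). (\<Prod>x\<in>{0+a,0+b}. dlt E s x)) L)"
      unfolding S2_def E_def by (rule sum_sh[OF g(3) g(2)])
    also have "\<dots> = sum_list (map (\<lambda>(a,b). dloc L s a * dloc L s b) L)"
      by (rule sum_list_cong_set) (use pairs dj in auto)
    finally show ?thesis .
  qed
  have S3': "S3 E s = sum_list (map (\<lambda>(a,b). (dloc L s a)\<^sup>2 + (dloc L s b)\<^sup>2) L)"
  proof -
    have "S3 E s = sum_list (map (\<lambda>(a,b). (\<Sum>x\<in>{0+a,0+b}. (dlt E s x)\<^sup>2)) L)"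
      unfolding S3_def E_def by (rule sum_sh[OF g(3) g(2)])
    also have "\<dots> = sum_list (map (\<lambda>(a,b). (dloc L s a)\<^sup>2 + (dloc L s b)\<^sup>2) L)"
      by (rule sum_list_cong_set) (use pairs dj in auto)
    finally show ?thesis .
  qed
  have cardE: "card E = length L" unfolding E_def by (rule card_sh[OF g(3) g(2)])
  have "Inv E s"
    unfolding Inv_def
  proof (intro conjI)
    show "7 \<le> s" by (rule s7)
    show "finite E" unfolding E_def sh_def by simp
    show "\<forall>e\<in>E. \<exists>u v. e = {u, v} \<and> u < v \<and> v < s" using shE by blast
    show "\<forall>v<s. (adj E)\<^sup>*\<^sup>* v 0" using conn by blast
    show "deg E (s - 1) = 1" using degj g(8) by simp
    show "deg E 0 = 2" using degj g(7) by simp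
    show "S1 E s + 5 = 6 * (real (card E) + 1)" unfolding S1' cardE using g(9) by simp
    show "S2 E s + 6 = 9 * (real (card E) + 1)" unfolding S2' cardE using g(10) by simp
    show "S3 E s + 13 > 18 * (real (card E) + 1)" unfolding S3' cardE using g(11) by simp
  qed
  then show ?thesis unfolding E_def .
qed



lemma final:
  assumes I: "Inv E n" and notin: "{n - 1, 0} \<notin> E"
    and tri: "{1,2} \<in> E" "{2,4} \<in> E" "{1,4} \<in> E"
  shows "simple_graph {0..<n} (insert {n - 1, 0} E) \<and> connected_graph {0..<n} (insert {n - 1, 0} E)
     \<and> card {0..<n} = n \<and> neutral (insert {n - 1, 0} E) \<and> \<not> is_tree {0..<n} (insert {n - 1, 0} E)"
proof -
  define E' where "E' = insert {n - 1, 0} E"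
  have n7: "n \<ge> 7" and finE: "finite E" and edE: "\<forall>e\<in>E. \<exists>u v. e = {u,v} \<and> u < v \<and> v < n"
    and d1: "deg E (n - 1) = 1" and d0: "deg E 0 = 2" and conn: "\<forall>v<n. (adj E)\<^sup>*\<^sup>* v 0"
    and s1: "S1 E n + 5 = 6 * (real (card E) + 1)"
    and s2: "S2 E n + 6 = 9 * (real (card E) + 1)"
    and s3: "S3 E n + 13 > 18 * (real (card E) + 1)"
    using I unfolding Inv_def by auto
  have degE': "deg E' v = deg E v + (if v = n - 1 \<or> v = 0 then 1 else 0)" for v
  proof -
    have "deg E' v = deg (E \<union> {{n - 1, 0}}) v" unfolding E'_def by simp
    also have "\<dots> = deg E v + card {e\<in>{{n - 1, 0}}. v \<in> e}"
      by (rule deg_union) (use finE notin in auto)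
    also have "{e\<in>{{n - 1, 0}}. v \<in> e} = (if v = n - 1 \<or> v = 0 then {{n - 1, 0}} else {})" by auto
    finally show ?thesis by simp
  qed
  have dd: "real (deg E' v) = dlt E n v" for v
    using degE'[of v] n7 unfolding dlt_def by auto
  have dn1: "dlt E n (n - 1) = 2" and dz: "dlt E n 0 = 3" using d1 d0 n7 unfolding dlt_def by auto
  have ne: "n - 1 \<noteq> 0" using n7 by simp
  have cardE': "card E' = card E + 1" unfolding E'_def using finE notin by simp
  have T1: "(\<Sum>e\<in>E'. \<Sum>x\<in>e. real (deg E' x)) = S1 E n + 5"
  proof -
    have "(\<Sum>e\<in>E'. \<Sum>x\<in>e. real (deg E' x)) = (\<Sum>e\<in>E'. \<Sum>x\<in>e. dlt E n x)" by (simp only: dd)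
    then show ?thesis unfolding E'_def S1_def using finE notin ne dn1 dz by simp
  qed
  have T2: "(\<Sum>e\<in>E'. \<Prod>x\<in>e. real (deg E' x)) = S2 E n + 6"
  proof -
    have "(\<Sum>e\<in>E'. \<Prod>x\<in>e. real (deg E' x)) = (\<Sum>e\<in>E'. \<Prod>x\<in>e. dlt E n x)" by (simp only: dd)
    then show ?thesis unfolding E'_def S2_def using finE notin ne dn1 dz by simp
  qed
  have T3: "(\<Sum>e\<in>E'. \<Sum>x\<in>e. (real (deg E' x))\<^sup>2) = S3 E n + 13"
  proof -
    have "(\<Sum>e\<in>E'. \<Sum>x\<in>e. (real (deg E' x))\<^sup>2) = (\<Sum>e\<in>E'. \<Sum>x\<in>e. (dlt E n x)\<^sup>2)" by (simp only: dd)
    then show ?thesis unfolding E'_def S3_def using finE notin ne dn1 dz by simp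
  qed
  define M where "M = real (card E) + 1"
  have M: "real (card E') = M" "M > 0" unfolding M_def cardE' by auto
  have mean: "assort_mean E' = 3"
    unfolding assort_mean_def M(1) using T1 s1 M(2)
    by (simp add: sum_divide_distrib[symmetric] M_def[symmetric])
  have num: "assort_num E' = 0"
    unfolding assort_num_def mean M(1) using T2 s2 M(2) by (simp add: M_def[symmetric])
  have den: "assort_den E' > 0"
  proof -
    have "assort_den E' = (1/2 * (S3 E n + 13)) / M - 9"
      unfolding assort_den_def mean M(1) using T3 by (simp add: sum_divide_distrib[symmetric])
    moreover have "(1/2 * (S3 E n + 13)) / M > 9" using s3 M(2) unfolding M_def[symmetric]
      by (simp add: field_simps)
    ultimately show ?thesis by simp
  qed
  have neut: "neutral E'"
    unfolding neutral_def assortativity_def using num den cardE' by simp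
  have simple: "simple_graph {0..<n} E'"
    unfolding simple_graph_def E'_def using edE n7 by fastforce
  have connE': "(adj E')\<^sup>*\<^sup>* v 0" if "v < n" for v
    using conn that adj_mono[of E E'] unfolding E'_def by blast
  have connected: "connected_graph {0..<n} E'"
    unfolding connected_graph_def using n7
    by (auto intro: rtranclp_trans[OF connE' adj_sym[OF connE']])
  have "is_cycle E' [1,2,4]"
    unfolding is_cycle_def using tri unfolding E'_def
    by (auto simp: adj_def nth_Cons' insert_commute less_Suc_eq)
  then have "\<not> is_tree {0..<n} E'" unfolding is_tree_def acyclic_graph_def by blast
  then show ?thesis using simple connected neut unfolding E'_def by simp
qed

definition Ut :: "nat \<Rightarrow> (nat \<times> nat) list" where
  "Ut t = (if t = 0 then U7 else if t = 1 then U8 else U9)"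
definition st :: "nat \<Rightarrow> nat" where
  "st t = (if t = 0 then 7 else if t = 1 then 8 else 9)"

lemma good_Ut: "good_unit (Ut t) (st t)"
  unfolding Ut_def st_def using good7 good8 good9 by auto

fun cN :: "nat list \<Rightarrow> nat" where
  "cN [] = 7"
| "cN (t # ts) = cN ts + st t"

fun cE :: "nat list \<Rightarrow> nat set set" where
  "cE [] = sh 0 U7"
| "cE (t # ts) = cE ts \<union> sh (cN ts) (Ut t) \<union> {{cN ts - 1, cN ts}}"

lemma chain_inv:
  "Inv (cE ts) (cN ts) \<and> {1,2} \<in> cE ts \<and> {2,4} \<in> cE ts \<and> {1,4} \<in> cE ts
   \<and> (ts \<noteq> [] \<longrightarrow> {cN ts - 1, 0} \<notin> cE ts)"
proof (induction ts)
  case Nil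
  have "Inv (sh 0 U7) 7" by (rule base[OF good7]) simp
  moreover have "{1,2} \<in> sh 0 U7" "{2,4} \<in> sh 0 U7" "{1,4} \<in> sh 0 U7"
    unfolding sh_def U7_def by (auto simp: image_iff)
  ultimately show ?case by simp
next
  case (Cons t ts)
  have "Inv (cE ts \<union> sh (cN ts) (Ut t) \<union> {{cN ts - 1, cN ts}}) (cN ts + st t)
       \<and> {cN ts + st t - 1, 0} \<notin> cE ts \<union> sh (cN ts) (Ut t) \<union> {{cN ts - 1, cN ts}}"
    by (rule step) (use Cons.IH good_Ut in auto)
  then show ?case using Cons.IH by auto
qed

lemma cN_sum: "cN ts = 7 + sum_list (map st ts)"
  by (induction ts) auto

lemma repr: "k \<ge> 28 \<Longrightarrow> \<exists>ts. ts \<noteq> [] \<and> sum_list (map st ts) = k"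
proof (induction k rule: less_induct)
  case (less k)
  show ?case
  proof (cases "k \<ge> 35")
    case True
    from less.IH[of "k - 7"] True have "\<exists>ts. ts \<noteq> [] \<and> sum_list (map st ts) = k - 7" by simp
    then obtain ts where "ts \<noteq> []" "sum_list (map st ts) = k - 7" by blast
    moreover have "st 0 = 7" by (simp add: st_def)
    ultimately show ?thesis using True by (intro exI[of _ "0 # ts"]) auto
  next
    case False
    then have "k = 28 \<or> k = 29 \<or> k = 30 \<or> k = 31 \<or> k = 32 \<or> k = 33 \<or> k = 34" using less.prems by auto
    then show ?thesis
    proof (elim disjE)
      assume "k = 28" then show ?thesis by (intro exI[of _ "[0,0,0,0]"]) (simp add: st_def)
    next
      assume "k = 29" then show ?thesis by (intro exI[of _ "[0,0,0,1]"]) (simp add: st_def)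
    next
      assume "k = 30" then show ?thesis by (intro exI[of _ "[0,0,1,1]"]) (simp add: st_def)
    next
      assume "k = 31" then show ?thesis by (intro exI[of _ "[0,1,1,1]"]) (simp add: st_def)
    next
      assume "k = 32" then show ?thesis by (intro exI[of _ "[1,1,1,1]"]) (simp add: st_def)
    next
      assume "k = 33" then show ?thesis by (intro exI[of _ "[1,1,1,2]"]) (simp add: st_def)
    next
      assume "k = 34" then show ?thesis by (intro exI[of _ "[1,1,2,2]"]) (simp add: st_def)
    qed
  qed
qed

theorem theorem3:
  fixes n :: nat
  assumes "n \<ge> 38"
  shows "\<exists>(V :: nat set) (E :: nat set set).
           simple_graph V E \<and> connected_graph V E \<and> card V = n \<and>
           neutral E \<and> \<not> is_tree V E"
proof -
  from repr[of "n - 7"] assms have "\<exists>ts. ts \<noteq> [] \<and> sum_list (map st ts) = n - 7" by simp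
  then obtain ts where ts: "ts \<noteq> []" "sum_list (map st ts) = n - 7" by blast
  have cn: "cN ts = n" using ts(2) assms by (simp add: cN_sum)
  have "Inv (cE ts) n" "{n - 1, 0} \<notin> cE ts" "{1,2} \<in> cE ts" "{2,4} \<in> cE ts" "{1,4} \<in> cE ts"
    using chain_inv[of ts] ts(1) cn by auto
  from final[OF this] show ?thesis by blast
qed

end
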